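(* Let $C_\bullet(\eta)$ be the chain complex with $C_n(\eta)=\mathrm{id}_L\otimes_R B_+^{\otimes_R n}\otimes_R\mathrm{id}_{\mathcal O}$ and differential $d(a_1\otimes\cdots\otimes a_n)=\sum_{i=1}^{n-1}(-1)^i a_1\otimes\cdots\otimes a_ia_{i+1}\otimes\cdots\otimes a_n$, and $C_\bullet^{(m)}(\eta)$ its subcomplex of internal degree $m$. Then for all $n\ge1$: $H_n(C_\bullet^{(n)}(\eta))\cong k$ for $n\in\{1,2\}$ and $0$ otherwise; $H_n(C_\bullet^{(n-1)}(\eta))\cong k$ for $n\in\{5,6\}$ and $0$ otherwise; $H_n(C_\bullet^{(n-2)}(\eta))\cong k$ for $n\in\{9,10\}$ and $0$ otherwise; $H_n(C_\bullet^{(n-3)}(\eta))\cong k$ for $n\in\{13,14\}$ and $0$ otherwise.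
   Context: Let $k$ be a field with $\operatorname{char}k\neq2,3$. Let $B$ be the graded $k$-algebra with $k$-basis $\mathrm{id}_L,\mathrm{id}_{\mathcal O},\theta$ (degree $0$) and $\eta,\xi,\xi_L$ (degree $1$), whose only nonzero products of basis elements are $\mathrm{id}_L\mathrm{id}_L=\mathrm{id}_L$, $\mathrm{id}_{\mathcal O}\mathrm{id}_{\mathcal O}=\mathrm{id}_{\mathcal O}$, $\mathrm{id}_L\xi_L=\xi_L\mathrm{id}_L=\xi_L$, $\mathrm{id}_{\mathcal O}\xi=\xi\mathrm{id}_{\mathcal O}=\xi$, $\mathrm{id}_L\eta=\eta\,\mathrm{id}_{\mathcal O}=\eta$, $\mathrm{id}_{\mathcal O}\theta=\theta\,\mathrm{id}_L=\theta$, $\theta\eta=\xi$, $\eta\theta=\xi_L$. Let $R=k\langle\mathrm{id}_L,\mathrm{id}_{\mathcal O}\rangle$ and $B_+=\langle\theta,\eta,\xi,\xi_L\rangle$; tensor products are over $R$. Thus $B_+^{\otimes_R n}$ has $k$-basis the words $a_1\otimes\cdots\otimes a_n$, $a_i\in\{\theta,\eta,\xi,\xi_L\}$, with the right idempotent of $a_i$ equal to the left idempotent of $a_{i+1}$, where (left, right) idempotents are $\theta:(\mathrm{id}_{\mathcal O},\mathrm{id}_L)$, $\eta:(\mathrm{id}_L,\mathrm{id}_{\mathcal O})$, $\xi:(\mathrm{id}_{\mathcal O},\mathrm{id}_{\mathcal O})$, $\xi_L:(\mathrm{id}_L,\mathrm{id}_L)$; $\mathrm{id}_L\otimes(\cdot)\otimes\mathrm{id}_{\mathcal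 O}$ selects words whose first letter has left idempotent $\mathrm{id}_L$ and whose last letter has right idempotent $\mathrm{id}_{\mathcal O}$. Internal degree of a word is the sum of the degrees of its letters. *)

theory Defs
  imports Main
begin

text \<open>The basis letters of the augmentation ideal B_+ and the two idempotents.\<close>
datatype letter = Theta | Eta | Xi | XiL
datatype idem = IdL | IdO

fun lidem :: "letter \<Rightarrow> idem" where
  "lidem Theta = IdO" | "lidem Eta = IdL" | "lidem Xi = IdO" | "lidem XiL = IdL"

fun ridem :: "letter \<Rightarrow> idem" where
  "ridem Theta = IdL" | "ridem Eta = IdO" | "ridem Xi = IdO" | "ridem XiL = IdL"

fun ldeg :: "letter \<Rightarrow> int" where
  "ldeg Theta = 0" | "ldeg Eta = 1" | "ldeg Xi = 1" | "ldeg XiL = 1"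

text \<open>Product of two basis letters of B_+ (None means the product is zero).\<close>
fun lmult :: "letter \<Rightarrow> letter \<Rightarrow> letter option" where
  "lmult Theta Eta = Some Xi"
| "lmult Eta Theta = Some XiL"
| "lmult _ _ = None"

text \<open>Basis words of id_L (x) B_+^{(x) n} (x) id_O: nonempty composable words starting at
  id_L and ending at id_O.\<close>
definition valid_word :: "letter list \<Rightarrow> bool" where
  "valid_word v \<longleftrightarrow> v \<noteq> [] \<and> lidem (hd v) = IdL \<and> ridem (last v) = IdO \<and>
     (\<forall>i. Suc i < length v \<longrightarrow> ridem (v ! i) = lidem (v ! Suc i))"

definition word_deg :: "letter list \<Rightarrow> int" where
  "word_deg v = (\<Sum>x\<leftarrow>v. ldeg x)"

definition basis_words :: "nat \<Rightarrow> int \<Rightarrow> letter list set" where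
  "basis_words n m = {v. length v = n \<and> valid_word v \<and> word_deg v = m}"

text \<open>Contraction a_1 .. a_i a_{i+1} .. a_n (i is 1-indexed, 1 \<le> i \<le> n-1).\<close>
definition contract :: "letter list \<Rightarrow> nat \<Rightarrow> letter list option" where
  "contract v i = (case lmult (v ! (i - 1)) (v ! i) of
      None \<Rightarrow> None
    | Some x \<Rightarrow> Some (take (i - 1) v @ x # drop (Suc i) v))"

definition incidence :: "letter list \<Rightarrow> letter list \<Rightarrow> 'k::field" where
  "incidence v w = (\<Sum>i\<in>{1..<length v}. if contract v i = Some w then (-1) ^ i else 0)"

text \<open>Chains of homological degree n and internal degree m, as k-valued functions on words
  supported on the basis words.\<close>
definition chains :: "nat \<Rightarrow> int \<Rightarrow> (letter list \<Rightarrow> 'k::field) set" where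
  "chains n m = {c. \<forall>w. c w \<noteq> 0 \<longrightarrow> w \<in> basis_words n m}"

definition bdry :: "(letter list \<Rightarrow> 'k::field) \<Rightarrow> (letter list \<Rightarrow> 'k)" where
  "bdry c = (\<lambda>w. \<Sum>v\<in>{v. length v = Suc (length w) \<and> valid_word v}. c v * incidence v w)"

definition cycles :: "nat \<Rightarrow> int \<Rightarrow> (letter list \<Rightarrow> 'k::field) set" where
  "cycles n m = {c \<in> chains n m. bdry c = (\<lambda>_. 0)}"

definition boundaries :: "nat \<Rightarrow> int \<Rightarrow> (letter list \<Rightarrow> 'k::field) set" where
  "boundaries n m = bdry ` chains (Suc n) m"

definition hclass :: "nat \<Rightarrow> int \<Rightarrow> (letter list \<Rightarrow> 'k::field) \<Rightarrow> (letter list \<Rightarrow> 'k) set" where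
  "hclass n m z = {z' \<in> cycles n m. (\<lambda>w. z w - z' w) \<in> boundaries n m}"

definition homology :: "nat \<Rightarrow> int \<Rightarrow> (letter list \<Rightarrow> 'k::field) set set" where
  "homology n m = hclass n m ` cycles n m"

definition homology_iso_field :: "'k::field itself \<Rightarrow> nat \<Rightarrow> int \<Rightarrow> bool" where
  "homology_iso_field _ n m \<longleftrightarrow>
     (\<exists>\<phi> :: (letter list \<Rightarrow> 'k) set \<Rightarrow> 'k.
        bij_betw \<phi> (homology n m) UNIV \<and>
        (\<forall>x\<in>cycles n m. \<forall>y\<in>cycles n m.
            \<phi> (hclass n m (\<lambda>w. x w + y w)) = \<phi> (hclass n m x) + \<phi> (hclass n m y)) \<and>
        (\<forall>a. \<forall>x\<in>cycles n m. \<phi> (hclass n m (\<lambda>w. a * x w)) = a * \<phi> (hclass n m x)))"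

definition homology_zero :: "'k::field itself \<Rightarrow> nat \<Rightarrow> int \<Rightarrow> bool" where
  "homology_zero _ n m \<longleftrightarrow> is_singleton (homology n m :: (letter list \<Rightarrow> 'k) set set)"

end

theory Submission
  imports Defs
begin

lemma UNIV_letter: "(UNIV :: letter set) = {Theta, Eta, Xi, XiL}"
  by (auto intro: letter.exhaust)

lemma finite_letter: "finite (UNIV :: letter set)"
  by (simp add: UNIV_letter)

lemma finite_len: "finite {v :: letter list. length v = n \<and> P v}"
proof -
  have "{v :: letter list. length v = n \<and> P v} \<subseteq> {xs. set xs \<subseteq> UNIV \<and> length xs = n}" by auto
  moreover have "finite {xs :: letter list. set xs \<subseteq> UNIV \<and> length xs = n}"
    by (rule finite_lists_length_eq[OF finite_letter])
  ultimately show ?thesis by (rule finite_subset)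
qed

lemma finite_basis: "finite (basis_words n m)"
  unfolding basis_words_def using finite_len[of n "\<lambda>v. valid_word v \<and> word_deg v = m"] by simp

definition cmp :: "letter \<Rightarrow> letter \<Rightarrow> bool" where "cmp a b \<longleftrightarrow> ridem a = lidem b"

lemma all_nat_split: "(\<forall>i::nat. P i) \<longleftrightarrow> P 0 \<and> (\<forall>i. P (Suc i))"
  by (metis not0_implies_Suc)

lemma succ_nth: "successively R v \<longleftrightarrow> (\<forall>i. Suc i < length v \<longrightarrow> R (v ! i) (v ! Suc i))"
proof (induction v)
  case (Cons x xs)
  show ?case
  proof (cases xs)
    case (Cons y ys)
    have "(\<forall>i. Suc i < length (x#xs) \<longrightarrow> R ((x#xs) ! i) ((x#xs) ! Suc i)) \<longleftrightarrow>
          R x y \<and> (\<forall>i. Suc i < length xs \<longrightarrow> R (xs ! i) (xs ! Suc i))"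
      by (subst all_nat_split) (simp add: Cons)
    then show ?thesis using Cons.IH Cons by simp
  qed simp
qed simp

lemma valid_succ: "valid_word v \<longleftrightarrow> v \<noteq> [] \<and> lidem (hd v) = IdL \<and> ridem (last v) = IdO \<and> successively cmp v"
  unfolding valid_word_def succ_nth cmp_def by auto

lemma lmult_Some: "lmult a b = Some c \<Longrightarrow> (a = Theta \<and> b = Eta \<and> c = Xi) \<or> (a = Eta \<and> b = Theta \<and> c = XiL)"
  by (cases a; cases b; auto)

lemma contract_app: "contract (p @ a # b # s) (Suc (length p)) = map_option (\<lambda>c. p @ c # s) (lmult a b)"
  unfolding contract_def by (auto simp: nth_append split: option.splits)

lemma split1:
  assumes "1 \<le> i" "i < length x"
  shows "x = take (i - 1) x @ x ! (i - 1) # x ! i # drop (Suc i) x"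
proof -
  have "x = take (i - 1) x @ x ! (i - 1) # drop (Suc (i - 1)) x" using assms by (intro id_take_nth_drop) simp
  moreover have "drop (Suc (i - 1)) x = x ! i # drop (Suc i) x" using assms by (simp add: Cons_nth_drop_Suc)
  ultimately show ?thesis by simp
qed

lemma contract_Some:
  assumes "1 \<le> i" "i < length x" "contract x i = Some v"
  shows "\<exists>p a b s c. x = p @ a # b # s \<and> length p = i - 1 \<and> lmult a b = Some c \<and> v = p @ c # s"
proof -
  have x: "x = take (i - 1) x @ x ! (i - 1) # x ! i # drop (Suc i) x"
  proof -
    have "x = take (i - 1) x @ x ! (i - 1) # drop (Suc (i - 1)) x" using assms by (intro id_take_nth_drop) simp
    moreover have "drop (Suc (i - 1)) x = x ! i # drop (Suc i) x" using assms by (simp add: Cons_nth_drop_Suc)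
    ultimately show ?thesis by simp
  qed
  have l: "length (take (i - 1) x) = i - 1" using assms by simp
  from assms(3) obtain c where c: "lmult (x ! (i - 1)) (x ! i) = Some c" and v: "v = take (i - 1) x @ c # drop (Suc i) x"
    unfolding contract_def by (auto split: option.splits)
  show ?thesis using x l c v by blast
qed

lemma valid_contract_iff:
  assumes "lmult a b = Some c"
  shows "valid_word (p @ a # b # s) \<longleftrightarrow> valid_word (p @ c # s)"
proof -
  have e: "lidem a = lidem c" "ridem b = ridem c" "ridem a = lidem b" using lmult_Some[OF assms] by auto
  have h: "lidem (hd (p @ a # b # s)) = lidem (hd (p @ c # s))" using e by (cases p) auto
  have l: "ridem (last (p @ a # b # s)) = ridem (last (p @ c # s))" using e by (cases s rule: rev_cases) auto
  have s1: "successively cmp (p @ [a, b] @ s) \<longleftrightarrow> successively cmp (p @ [c] @ s)"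
    using e unfolding successively_append_iff by (cases s) (auto simp: cmp_def)
  have s2: "successively cmp (p @ a # b # s) \<longleftrightarrow> successively cmp (p @ c # s)"
    using s1 by simp
  have ne: "(p @ a # b # s = []) = False" "(p @ c # s = []) = False" by simp_all
  show ?thesis unfolding valid_succ by (simp only: h l s2 ne not_False_eq_True simp_thms)
qed

lemma deg_contract:
  assumes "lmult a b = Some c"
  shows "word_deg (p @ a # b # s) = word_deg (p @ c # s)"
  using lmult_Some[OF assms] by (auto simp: word_deg_def)

lemma contract_props:
  assumes "1 \<le> i" "i < length x" "contract x i = Some v"
  shows "valid_word v = valid_word x \<and> length v = length x - 1 \<and> word_deg v = word_deg x"
proof -
  obtain p a b s c where "x = p @ a # b # s" "length p = i - 1" "lmult a b = Some c" "v = p @ c # s"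
    using contract_Some[OF assms] by blast
  then show ?thesis using valid_contract_iff[of a b c p s] deg_contract[of a b c p s] by simp
qed


definition dc :: "letter list \<Rightarrow> nat \<Rightarrow> nat \<Rightarrow> letter list option" where
  "dc x i i' = (case contract x i of None \<Rightarrow> None | Some v \<Rightarrow> contract v i')"

lemma lmult_None_X: "lmult Xi a = None" "lmult a Xi = None" "lmult XiL a = None" "lmult a XiL = None"
  by (cases a; simp)+

lemma lmult_None_res: "lmult a b = Some c \<Longrightarrow> lmult c d = None \<and> lmult d c = None"
  using lmult_Some lmult_None_X by blast

lemma dc_comm_split:
  "dc (p @ a # b # q @ c # d # s) (Suc (length (p @ a # b # q))) (Suc (length p))
   = dc (p @ a # b # q @ c # d # s) (Suc (length p)) (Suc (length (p @ a # q)))"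
proof -
  have e1: "contract (p @ a # b # q @ c # d # s) (Suc (length (p @ a # b # q))) = map_option (\<lambda>e. (p @ a # b # q) @ e # s) (lmult c d)"
    using contract_app[of "p @ a # b # q" c d s] by simp
  have e2: "contract (p @ a # b # q @ c # d # s) (Suc (length p)) = map_option (\<lambda>f. p @ f # (q @ c # d # s)) (lmult a b)"
    using contract_app[of p a b "q @ c # d # s"] by simp
  show ?thesis
  proof (cases "lmult c d"; cases "lmult a b")
    fix e f assume ce: "lmult c d = Some e" and af: "lmult a b = Some f"
    have "contract (p @ a # b # (q @ e # s)) (Suc (length p)) = Some (p @ f # q @ e # s)"
      using contract_app[of p a b "q @ e # s"] af by simp
    moreover have "contract ((p @ f # q) @ c # d # s) (Suc (length (p @ f # q))) = Some ((p @ f # q) @ e # s)"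
      using contract_app[of "p @ f # q" c d s] ce by simp
    ultimately show ?thesis using ce af e1 e2 unfolding dc_def by simp
  next
    fix e assume ce: "lmult c d = Some e" and af: "lmult a b = None"
    have "contract (p @ a # b # (q @ e # s)) (Suc (length p)) = None"
      using contract_app[of p a b "q @ e # s"] af by simp
    then show ?thesis using ce af e1 e2 unfolding dc_def by simp
  next
    fix f assume ce: "lmult c d = None" and af: "lmult a b = Some f"
    have "contract ((p @ f # q) @ c # d # s) (Suc (length (p @ f # q))) = None"
      using contract_app[of "p @ f # q" c d s] ce by simp
    then show ?thesis using ce af e1 e2 unfolding dc_def by simp
  next
    assume ce: "lmult c d = None" and af: "lmult a b = None"
    then show ?thesis using e1 e2 unfolding dc_def by simp
  qed
qed

lemma split2:
  assumes "1 \<le> i'" "i' + 2 \<le> i" "i < length x"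
  shows "\<exists>p a b q c d s. x = p @ a # b # q @ c # d # s \<and> length p = i' - 1 \<and> length q = i - i' - 2"
proof -
  have x: "x = take (i' - 1) x @ x ! (i' - 1) # x ! i' # drop (Suc i') x"
    using assms by (intro split1) auto
  define y where "y = drop (Suc i') x"
  have ly: "length y = length x - Suc i'" unfolding y_def by simp
  have y: "y = take (i - i' - 1 - 1) y @ y ! (i - i' - 1 - 1) # y ! (i - i' - 1) # drop (Suc (i - i' - 1)) y"
    using assms ly by (intro split1) auto
  have "x = take (i' - 1) x @ x ! (i' - 1) # x ! i' # take (i - i' - 1 - 1) y @ y ! (i - i' - 1 - 1) # y ! (i - i' - 1) # drop (Suc (i - i' - 1)) y"
    using x y unfolding y_def by metis
  moreover have "length (take (i' - 1) x) = i' - 1" "length (take (i - i' - 1 - 1) y) = i - i' - 2"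
    using assms ly by auto
  ultimately show ?thesis by metis
qed

lemma dc_comm:
  assumes "1 \<le> i'" "i' + 2 \<le> i" "i < length x"
  shows "dc x i i' = dc x i' (i - 1)"
proof -
  obtain p a b q c d s where x: "x = p @ a # b # q @ c # d # s" and lp: "length p = i' - 1" and lq: "length q = i - i' - 2"
    using split2[OF assms] by blast
  have "i = Suc (length (p @ a # b # q))" "i' = Suc (length p)" "i - 1 = Suc (length (p @ a # q))"
    using lp lq assms by auto
  then show ?thesis using dc_comm_split[of p a b q c d s] x by simp
qed

lemma dc_None:
  assumes "1 \<le> i" "i < length x" "i' = i - 1 \<or> i' = i" "1 \<le> i'" "i' < length x - 1"
  shows "dc x i i' = None"
proof (cases "contract x i")
  case (Some v)
  obtain p a b s c where x: "x = p @ a # b # s" and lp: "length p = i - 1" and c: "lmult a b = Some c" and v: "v = p @ c # s"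
    using contract_Some[OF assms(1,2) Some] by blast
  show ?thesis
  proof (cases "i' = i - 1")
    case True
    then obtain p' y where "p = p' @ [y]" using assms lp by (cases p rule: rev_cases) auto
    then have "contract v i' = map_option (\<lambda>e. p' @ e # s) (lmult y c)"
      using contract_app[of p' y c s] v lp True by simp
    then show ?thesis using Some lmult_None_res[OF c] unfolding dc_def by simp
  next
    case False
    then have ii: "i' = i" using assms by auto
    then obtain z s' where "s = z # s'" using assms x lp by (cases s) auto
    then have "contract v i' = map_option (\<lambda>e. p @ e # s') (lmult c z)"
      using contract_app[of p c z s'] v lp ii assms by simp
    then show ?thesis using Some lmult_None_res[OF c] unfolding dc_def by simp
  qed
qed (simp add: dc_def)


lemma sum_invol_zero:
  fixes f :: "'a \<Rightarrow> 'k::field"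
  assumes two: "(2::'k) \<noteq> 0" and fin: "finite A" and inv: "\<And>p. p \<in> A \<Longrightarrow> \<tau> p \<in> A \<and> \<tau> (\<tau> p) = p"
    and neg: "\<And>p. p \<in> A \<Longrightarrow> f (\<tau> p) = - f p"
  shows "sum f A = 0"
proof -
  have bij: "bij_betw \<tau> A A"
    by (rule bij_betw_byWitness[where f'=\<tau>]) (use inv in auto)
  have "sum f A = sum (f \<circ> \<tau>) A"
    using sum.reindex_bij_betw[OF bij, of f] by simp
  also have "\<dots> = - sum f A" using neg by (simp add: sum_negf[symmetric])
  finally have "2 * sum f A = 0" by (simp add: algebra_simps)
  then show ?thesis using two by simp
qed

lemma mult_if0: "(if P then a else 0) * b = (if P then a * b else (0::'k::field))" by simp

lemma sum_some_eq:
  assumes "finite V" "\<And>v. c = Some v \<Longrightarrow> v \<in> V"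
  shows "(\<Sum>v\<in>V. if c = Some v then f v else 0) = (case c of None \<Rightarrow> 0 | Some v \<Rightarrow> f v)"
proof (cases c)
  case (Some v0)
  then have "v0 \<in> V" using assms by simp
  then show ?thesis using Some assms(1) by (simp add: sum.delta)
qed simp

lemma inner_zero:
  fixes w :: "letter list"
  assumes two: "(2::'k::field) \<noteq> 0" and vx: "valid_word x" and lx: "length x = Suc (Suc (length w))"
  shows "(\<Sum>v\<in>{v. length v = Suc (length w) \<and> valid_word v}. incidence x v * incidence v w) = (0::'k)"
proof -
  define V where "V = {v. length v = Suc (length w) \<and> valid_word v}"
  define I where "I = {1..<length x}"
  define I' where "I' = {1..<length x - 1}"
  define g :: "nat \<Rightarrow> nat \<Rightarrow> 'k" where "g i i' = (if dc x i i' = Some w then (-1) ^ (i + i') else 0)" for i i'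
  have finV: "finite V" unfolding V_def by (rule finite_len)
  have "(\<Sum>v\<in>V. incidence x v * incidence v w) =
        (\<Sum>v\<in>V. \<Sum>i\<in>I. if contract x i = Some v then (-1) ^ i * incidence v w else (0::'k))"
    unfolding incidence_def[of x] I_def by (simp add: sum_distrib_right mult_if0)
  also have "\<dots> = (\<Sum>i\<in>I. \<Sum>v\<in>V. if contract x i = Some v then (-1) ^ i * incidence v w else (0::'k))"
    by (rule sum.swap)
  also have "\<dots> = (\<Sum>i\<in>I. \<Sum>i'\<in>I'. g i i')"
  proof (rule sum.cong[OF refl])
    fix i assume i: "i \<in> I"
    have mem: "\<And>v. contract x i = Some v \<Longrightarrow> v \<in> V"
      using contract_props[of i x] i vx lx unfolding I_def V_def by auto
    have "(\<Sum>v\<in>V. if contract x i = Some v then (-1) ^ i * incidence v w else (0::'k))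
          = (case contract x i of None \<Rightarrow> 0 | Some v \<Rightarrow> (-1) ^ i * incidence v w)"
      by (rule sum_some_eq[OF finV mem])
    also have "\<dots> = (\<Sum>i'\<in>I'. g i i')"
    proof (cases "contract x i")
      case None
      then show ?thesis unfolding g_def dc_def by simp
    next
      case (Some v)
      have "length v = length x - 1" using contract_props[of i x v] i Some unfolding I_def by auto
      then show ?thesis using Some unfolding g_def dc_def incidence_def I'_def
        by (simp add: sum_distrib_left power_add if_distrib cong: if_cong)
    qed
    finally show "(\<Sum>v\<in>V. if contract x i = Some v then (-1) ^ i * incidence v w else (0::'k)) = (\<Sum>i'\<in>I'. g i i')" .
  qed
  also have "\<dots> = (\<Sum>p\<in>I \<times> I'. case p of (a, b) \<Rightarrow> g a b)"
    by (simp add: sum.cartesian_product)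
  also have "\<dots> = 0"
  proof (rule sum_invol_zero[OF two, where \<tau> = "\<lambda>(i, i'). if i' + 2 \<le> i then (i', i - 1) else if i < i' then (Suc i', i) else (i, i')"])
    show "finite (I \<times> I')" unfolding I_def I'_def by simp
  next
    fix p assume "p \<in> I \<times> I'"
    then obtain i i' where p: "p = (i, i')" and ii: "1 \<le> i" "i < length x" "1 \<le> i'" "i' < length x - 1"
      unfolding I_def I'_def by auto
    show "(case p of (i, i') \<Rightarrow> if i' + 2 \<le> i then (i', i - 1) else if i < i' then (Suc i', i) else (i, i')) \<in> I \<times> I' \<and>
          (case (case p of (i, i') \<Rightarrow> if i' + 2 \<le> i then (i', i - 1) else if i < i' then (Suc i', i) else (i, i')) of
            (i, i') \<Rightarrow> if i' + 2 \<le> i then (i', i - 1) else if i < i' then (Suc i', i) else (i, i')) = p"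
      using ii unfolding p I_def I'_def by auto
    have A: "g (fst q) (snd q) = 0" if "\<not> (snd q + 2 \<le> fst q)" "\<not> fst q < snd q" "1 \<le> fst q" "fst q < length x" "1 \<le> snd q" "snd q < length x - 1" for q
    proof -
      have "dc x (fst q) (snd q) = None" by (rule dc_None) (use that in auto)
      then show ?thesis unfolding g_def by simp
    qed
    have Bc: "g i' (i - 1) = - g i i'" if "i' + 2 \<le> i" "1 \<le> i'" "i < length x" for i i'
    proof -
      have "dc x i i' = dc x i' (i - 1)" by (rule dc_comm) (use that in auto)
      moreover have "(-1::'k) ^ (i' + (i - 1)) = - ((-1) ^ (i + i'))"
      proof -
        have h: "i + i' = Suc (i' + (i - 1))" using that by auto
        show ?thesis by (simp only: h power_Suc) simp
      qed
      ultimately show ?thesis unfolding g_def by auto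
    qed
    show "(case (case p of (i, i') \<Rightarrow> if i' + 2 \<le> i then (i', i - 1) else if i < i' then (Suc i', i) else (i, i')) of (a, b) \<Rightarrow> g a b)
          = - (case p of (a, b) \<Rightarrow> g a b)"
    proof -
      consider (a) "i' + 2 \<le> i" | (b) "\<not> i' + 2 \<le> i" "i < i'" | (c) "\<not> i' + 2 \<le> i" "\<not> i < i'" by blast
      then show ?thesis
      proof cases
        case a then show ?thesis using Bc[of i' i] ii unfolding p by simp
      next
        case b
        have "g i (Suc i' - 1) = - g (Suc i') i" using Bc[of i "Suc i'"] ii b by simp
        then show ?thesis using b unfolding p by simp
      next
        case c
        then show ?thesis using A[of p] ii unfolding p by simp
      qed
    qed
  qed
  finally show ?thesis unfolding V_def .
qed

lemma bdry_bdry: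
  assumes two: "(2::'k::field) \<noteq> 0"
  shows "bdry (bdry (c :: letter list \<Rightarrow> 'k)) = (\<lambda>_. 0)"
proof
  fix w :: "letter list"
  define V where "V = {v. length v = Suc (length w) \<and> valid_word v}"
  define W where "W = {x. length x = Suc (Suc (length w)) \<and> valid_word x}"
  have "bdry (bdry c) w = (\<Sum>v\<in>V. (\<Sum>x\<in>W. c x * incidence x v) * incidence v w)"
    unfolding bdry_def V_def W_def
    by (rule sum.cong) auto
  also have "\<dots> = (\<Sum>v\<in>V. \<Sum>x\<in>W. c x * (incidence x v * incidence v w))"
    by (simp add: sum_distrib_right mult.assoc)
  also have "\<dots> = (\<Sum>x\<in>W. \<Sum>v\<in>V. c x * (incidence x v * incidence v w))"
    by (rule sum.swap)
  also have "\<dots> = (\<Sum>x\<in>W. c x * (\<Sum>v\<in>V. incidence x v * incidence v w))"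
    by (simp add: sum_distrib_left)
  also have "\<dots> = 0"
    using inner_zero[OF two] unfolding W_def V_def by (intro sum.neutral) auto
  finally show "bdry (bdry c) w = 0" .
qed


definition cpat :: "nat \<Rightarrow> letter" where
  "cpat q = (if q mod 4 = 0 then Eta else if q mod 4 = 1 then Xi else if q mod 4 = 2 then Theta else XiL)"

fun plk :: "nat \<Rightarrow> letter list \<Rightarrow> nat" where
  "plk k [] = 0"
| "plk k (a # xs) = (if a = cpat k then Suc (plk (Suc k) xs) else 0)"

definition pl :: "letter list \<Rightarrow> nat" where "pl xs = plk 0 xs"

lemma plk_props:
  "plk k xs \<le> length xs \<and> (\<forall>q < plk k xs. xs ! q = cpat (k + q)) \<and>
   (plk k xs < length xs \<longrightarrow> xs ! plk k xs \<noteq> cpat (k + plk k xs))"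
proof (induction xs arbitrary: k)
  case (Cons a xs)
  show ?case
  proof (cases "a = cpat k")
    case True
    have "\<forall>q < Suc (plk (Suc k) xs). (a # xs) ! q = cpat (k + q)"
    proof (intro allI impI)
      fix q assume "q < Suc (plk (Suc k) xs)"
      then show "(a # xs) ! q = cpat (k + q)" using Cons.IH[of "Suc k"] True
        by (cases q) auto
    qed
    then show ?thesis using Cons.IH[of "Suc k"] True by auto
  qed auto
qed simp

lemma pl_le: "pl xs \<le> length xs" using plk_props[of 0 xs] unfolding pl_def by simp
lemma pl_match: "q < pl xs \<Longrightarrow> xs ! q = cpat q" using plk_props[of 0 xs] unfolding pl_def by simp
lemma pl_mis: "pl xs < length xs \<Longrightarrow> xs ! pl xs \<noteq> cpat (pl xs)" using plk_props[of 0 xs] unfolding pl_def by simp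

lemma pl_eqI:
  assumes "j \<le> length xs" "\<And>q. q < j \<Longrightarrow> xs ! q = cpat q" "j < length xs \<Longrightarrow> xs ! j \<noteq> cpat j"
  shows "pl xs = j"
proof (rule ccontr)
  assume "pl xs \<noteq> j"
  then consider "pl xs < j" | "j < pl xs" by linarith
  then show False
  proof cases
    case 1
    have "pl xs < length xs" using 1 assms(1) by simp
    then have "xs ! pl xs \<noteq> cpat (pl xs)" by (rule pl_mis)
    moreover have "xs ! pl xs = cpat (pl xs)" using assms(2) 1 by simp
    ultimately show False by simp
  next
    case 2
    have jl: "j < length xs" using 2 pl_le[of xs] by simp
    have "xs ! j = cpat j" using 2 by (rule pl_match)
    then show False using assms(3)[OF jl] by simp
  qed
qed

definition up :: "letter list \<Rightarrow> bool" where
  "up u \<longleftrightarrow> pl u < length u \<and> ((pl u mod 4 = 0 \<and> u ! pl u = XiL) \<or> (pl u mod 4 = 2 \<and> u ! pl u = Xi))"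

definition Pw :: "letter list \<Rightarrow> letter list" where
  "Pw u = take (pl u) u @ (if u ! pl u = XiL then [Eta, Theta] else [Theta, Eta]) @ drop (Suc (pl u)) u"

lemma lemC:
  assumes up: "up u" and i: "1 \<le> i" "i < length v" and c: "contract v i = Some u"
  shows "(i = Suc (pl u) \<and> v = Pw u) \<or> (pl v < pl u \<and> pl v < length v) \<or> (up v \<and> pl v = pl u)"
proof -
  obtain p a b s c where v: "v = p @ a # b # s" and lp: "length p = i - 1" and ab: "lmult a b = Some c"
    and u: "u = p @ c # s"
    using contract_Some[OF i c] by blast
  note abc = lmult_Some[OF ab]
  define j where "j = pl u"
  have um: "\<And>q. q < j \<Longrightarrow> u ! q = cpat q" unfolding j_def by (rule pl_match)
  have jl: "j < length u" and uj: "(j mod 4 = 0 \<and> u ! j = XiL) \<or> (j mod 4 = 2 \<and> u ! j = Xi)"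
    using up unfolding up_def j_def by auto
  consider "length p < j" | "length p = j" | "j < length p" by linarith
  then show ?thesis
  proof cases
    case 1
    have "u ! length p = c" using u by simp
    then have cp: "cpat (length p) = c" using um[OF 1] by simp
    have "pl v = length p"
    proof (rule pl_eqI)
      show "length p \<le> length v" using v by simp
      fix q assume q: "q < length p"
      have "v ! q = u ! q" using v u q by (simp add: nth_append)
      then show "v ! q = cpat q" using um q 1 by simp
    next
      show "v ! length p \<noteq> cpat (length p)" using v cp abc by auto
    qed
    then show ?thesis using 1 v unfolding j_def by simp
  next
    case 2
    have uj2: "u ! j = c" using u 2[symmetric] by simp
    have tk: "take (pl u) u = p" "drop (Suc (pl u)) u = s" using u 2 unfolding j_def by auto
    have "v = Pw u" unfolding Pw_def tk using v abc uj2 j_def by auto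
    then show ?thesis using 2 lp i unfolding j_def by auto
  next
    case 3
    have vq: "v ! q = u ! q" if "q \<le> j" for q using v u that 3 by (simp add: nth_append)
    have "pl v = j"
    proof (rule pl_eqI)
      show "j \<le> length v" using v 3 by simp
      show "\<And>q. q < j \<Longrightarrow> v ! q = cpat q" using vq um by simp
      show "v ! j \<noteq> cpat j" using vq[of j] uj by (auto simp: cpat_def)
    qed
    moreover have "j < length v" using v 3 by simp
    ultimately have "up v" using uj vq[of j] unfolding up_def by auto
    then show ?thesis using \<open>pl v = j\<close> unfolding j_def by simp
  qed
qed

lemma Pw_props:
  assumes up: "up u"
  shows "contract (Pw u) (Suc (pl u)) = Some u" "pl (Pw u) = Suc (pl u)" "\<not> up (Pw u)"
    "length (Pw u) = Suc (length u)" "valid_word (Pw u) = valid_word u" "word_deg (Pw u) = word_deg u"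
proof -
  define j where "j = pl u"
  have jl: "j < length u" and uj: "(j mod 4 = 0 \<and> u ! j = XiL) \<or> (j mod 4 = 2 \<and> u ! j = Xi)"
    using up unfolding up_def j_def by auto
  have um: "\<And>q. q < j \<Longrightarrow> u ! q = cpat q" unfolding j_def by (rule pl_match)
  obtain a b where ab: "lmult a b = Some (u ! j)" and P: "Pw u = take j u @ a # b # drop (Suc j) u"
    and ac: "a = cpat j" and bc: "b \<noteq> cpat (Suc j)"
    using uj unfolding Pw_def j_def[symmetric]
    by (auto simp: cpat_def mod_Suc)
  have u: "u = take j u @ u ! j # drop (Suc j) u" using jl by (simp add: id_take_nth_drop)
  have lt: "length (take j u) = j" using jl by simp
  show "contract (Pw u) (Suc (pl u)) = Some u"
    using contract_app[of "take j u" a b "drop (Suc j) u"] ab P lt u unfolding j_def[symmetric] by simp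
  show "pl (Pw u) = Suc (pl u)" unfolding j_def[symmetric]
  proof (rule pl_eqI)
    show "Suc j \<le> length (Pw u)" using P jl by simp
    fix q assume q: "q < Suc j"
    show "Pw u ! q = cpat q"
    proof (cases "q < j")
      case True then show ?thesis using P um lt by (simp add: nth_append)
    next
      case False then have "q = j" using q by simp
      then show ?thesis using P lt ac by (simp add: nth_append)
    qed
  next
    show "Pw u ! Suc j \<noteq> cpat (Suc j)" using P lt bc by (simp add: nth_append)
  qed
  moreover have "j mod 4 = 0 \<or> j mod 4 = 2" using uj by auto
  then have "Suc j mod 4 = 1 \<or> Suc j mod 4 = 3" by presburger
  ultimately show "\<not> up (Pw u)" unfolding up_def j_def[symmetric] by auto
  show "length (Pw u) = Suc (length u)" using P jl by simp
  show "valid_word (Pw u) = valid_word u"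
    using valid_contract_iff[OF ab, of "take j u" "drop (Suc j) u"] P u by simp
  show "word_deg (Pw u) = word_deg u"
    using deg_contract[OF ab, of "take j u" "drop (Suc j) u"] P u by simp
qed

lemma incP:
  assumes "up w" "up w2" "pl w2 \<le> pl w"
  shows "incidence (Pw w) w2 = (if w2 = w then (-1) ^ Suc (pl w) else (0::'k::field))"
proof -
  note P1 = Pw_props[OF assms(1)]
  note P2 = Pw_props[OF assms(2)]
  have key: "i = Suc (pl w) \<and> w2 = w" if i: "i \<in> {1..<length (Pw w)}" and c: "contract (Pw w) i = Some w2" for i
  proof -
    have i1: "1 \<le> i" "i < length (Pw w)" using i by auto
    have D: "(i = Suc (pl w2) \<and> Pw w = Pw w2) \<or> (pl (Pw w) < pl w2 \<and> pl (Pw w) < length (Pw w)) \<or> (up (Pw w) \<and> pl (Pw w) = pl w2)"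
      by (rule lemC[OF assms(2) i1 c])
    have n1: "\<not> pl (Pw w) < pl w2" using P1(2) assms(3) by simp
    have E: "i = Suc (pl w2)" "Pw w = Pw w2" using D n1 P1(3) by blast+
    have "pl w2 = pl w" using E(2) P1(2) P2(2) by simp
    moreover have "Some w2 = Some w" using E(2) P1(1) P2(1) calculation by simp
    ultimately show ?thesis using E(1) by simp
  qed
  show ?thesis
  proof (cases "w2 = w")
    case True
    have mem: "Suc (pl w) \<in> {1..<length (Pw w)}" using P1(4) assms(1) unfolding up_def by auto
    have "incidence (Pw w) w2 = (\<Sum>i\<in>{1..<length (Pw w)}. if i = Suc (pl w) then (-1) ^ Suc (pl w) else (0::'k))"
      unfolding incidence_def
    proof (rule sum.cong[OF refl])
      fix i assume i: "i \<in> {1..<length (Pw w)}"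
      show "(if contract (Pw w) i = Some w2 then (-1) ^ i else (0::'k)) = (if i = Suc (pl w) then (-1) ^ Suc (pl w) else 0)"
      proof (cases "i = Suc (pl w)")
        case True
        then show ?thesis using P1(1) \<open>w2 = w\<close> by simp
      next
        case False
        then have "contract (Pw w) i \<noteq> Some w2" using key[OF i] by blast
        then show ?thesis using False by simp
      qed
    qed
    also have "\<dots> = (-1) ^ Suc (pl w)" using mem by (simp add: sum.delta')
    finally show ?thesis using True by simp
  next
    case False
    have "incidence (Pw w) w2 = (0::'k)" unfolding incidence_def
    proof (intro sum.neutral ballI)
      fix i assume i: "i \<in> {1..<length (Pw w)}"
      have "contract (Pw w) i \<noteq> Some w2" using key[OF i] False by blast
      then show "(if contract (Pw w) i = Some w2 then (-1) ^ i else (0::'k)) = 0" by simp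
    qed
    then show ?thesis using False by simp
  qed
qed

lemma cpat0: "q mod 4 = 0 \<Longrightarrow> cpat q = Eta" by (simp add: cpat_def)
lemma cpat1: "q mod 4 = 1 \<Longrightarrow> cpat q = Xi" by (simp add: cpat_def)
lemma cpat2: "q mod 4 = 2 \<Longrightarrow> cpat q = Theta" by (simp add: cpat_def)
lemma cpat3: "q mod 4 = 3 \<Longrightarrow> cpat q = XiL" by (simp add: cpat_def)

lemma lidL: "lidem x = IdL \<Longrightarrow> x \<noteq> Eta \<Longrightarrow> x = XiL" by (cases x) auto
lemma lidO: "lidem x = IdO \<Longrightarrow> x \<noteq> Theta \<Longrightarrow> x = Xi" by (cases x) auto
lemma lidL2: "lidem x = IdL \<Longrightarrow> x \<noteq> XiL \<Longrightarrow> x = Eta" by (cases x) auto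
lemma lidO2: "lidem x = IdO \<Longrightarrow> x \<noteq> Xi \<Longrightarrow> x = Theta" by (cases x) auto

lemma trich:
  assumes "valid_word v" "pl v < length v" "pl v mod 4 = 0 \<or> pl v mod 4 = 2"
  shows "up v"
proof -
  define j where "j = pl v"
  have jl: "j < length v" using assms(2) unfolding j_def .
  have mis: "v ! j \<noteq> cpat j" using pl_mis assms(2) unfolding j_def by simp
  have lid: "lidem (v ! j) = (if j mod 4 = 0 then IdL else IdO)"
  proof (cases j)
    case 0
    have "v \<noteq> []" "lidem (hd v) = IdL" using assms(1) unfolding valid_word_def by auto
    then have "lidem (v ! 0) = IdL" by (simp add: hd_conv_nth)
    then show ?thesis using 0 by simp
  next
    case (Suc j')
    have "ridem (v ! j') = lidem (v ! Suc j')" using assms(1) jl Suc unfolding valid_word_def by blast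
    then have r: "ridem (v ! j') = lidem (v ! j)" using Suc by simp
    have vj: "v ! j' = cpat j'" using pl_match[of j' v] Suc j_def by simp
    have m: "j mod 4 = 0 \<or> j mod 4 = 2" using assms(3) j_def by simp
    show ?thesis
    proof (cases "j mod 4 = 0")
      case True
      then have "j' mod 4 = 3" using Suc by presburger
      then show ?thesis using r vj cpat3 True by simp
    next
      case False
      then have "j mod 4 = 2" using m by simp
      then have "j' mod 4 = 1" using Suc by presburger
      then show ?thesis using r vj cpat1 False by simp
    qed
  qed
  have "(j mod 4 = 0 \<and> v ! j = XiL) \<or> (j mod 4 = 2 \<and> v ! j = Xi)"
  proof (cases "j mod 4 = 0")
    case True
    have "v ! j = XiL" by (rule lidL) (use lid mis cpat0[OF True] True in simp_all)
    then show ?thesis using True by simp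
  next
    case False
    then have m2: "j mod 4 = 2" using assms(3) j_def by simp
    have "v ! j = Xi" by (rule lidO) (use lid mis cpat2[OF m2] m2 in simp_all)
    then show ?thesis using m2 by simp
  qed
  then show ?thesis unfolding up_def j_def[symmetric] using jl by simp
qed

lemma mod_pred0: "(j::nat) mod 4 = 1 \<Longrightarrow> (j - 1) mod 4 = 0" by (cases j) (auto simp: mod_Suc split: if_splits)
lemma mod_pred2: "(j::nat) mod 4 = 3 \<Longrightarrow> (j - 1) mod 4 = 2" by (cases j) (auto simp: mod_Suc split: if_splits)

lemma down_dec:
  assumes "valid_word v" "pl v < length v" "\<not> up v"
  shows "\<exists>u. up u \<and> contract v (pl v) = Some u \<and> pl u = pl v - 1 \<and> 1 \<le> pl v \<and> v = Pw u"
proof -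
  define j where "j = pl v"
  have jl: "j < length v" using assms(2) unfolding j_def .
  have "\<not> (j mod 4 = 0 \<or> j mod 4 = 2)"
  proof
    assume h: "j mod 4 = 0 \<or> j mod 4 = 2"
    have "up v" using trich[OF assms(1,2)] h unfolding j_def by simp
    then show False using assms(3) by simp
  qed
  then have m: "j mod 4 = 1 \<or> j mod 4 = 3" by presburger
  then have j1: "1 \<le> j" by auto
  have mis: "v ! j \<noteq> cpat j" using pl_mis assms(2) unfolding j_def by simp
  have pm: "v ! (j - 1) = cpat (j - 1)" using pl_match[of "j - 1" v] j1 j_def by simp
  have sj: "Suc (j - 1) < length v" using jl j1 by simp
  have "ridem (v ! (j - 1)) = lidem (v ! Suc (j - 1))"
    using assms(1) sj unfolding valid_word_def by blast
  then have r: "ridem (v ! (j - 1)) = lidem (v ! j)" using j1 by simp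
  have cases: "(j mod 4 = 1 \<and> v ! (j - 1) = Eta \<and> v ! j = Theta) \<or> (j mod 4 = 3 \<and> v ! (j - 1) = Theta \<and> v ! j = Eta)"
  proof (cases "j mod 4 = 1")
    case True
    have "(j - 1) mod 4 = 0" using True by (rule mod_pred0)
    then have a: "v ! (j - 1) = Eta" using pm cpat0 by simp
    then have "lidem (v ! j) = IdO" using r by simp
    then have "v ! j = Theta" by (rule lidO2) (use mis cpat1[OF True] in simp)
    then show ?thesis using True a by simp
  next
    case False
    then have m3: "j mod 4 = 3" using m by simp
    have "(j - 1) mod 4 = 2" using m3 by (rule mod_pred2)
    then have a: "v ! (j - 1) = Theta" using pm cpat2 by simp
    then have "lidem (v ! j) = IdL" using r by simp
    then have "v ! j = Eta" by (rule lidL2) (use mis cpat3[OF m3] in simp)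
    then show ?thesis using m3 a by simp
  qed
  have "\<exists>c. lmult (v ! (j - 1)) (v ! j) = Some c"
    using cases by (elim disjE) simp_all
  then obtain c where c: "lmult (v ! (j - 1)) (v ! j) = Some c" by blast
  then obtain u where cu: "contract v j = Some u" unfolding contract_def by auto
  obtain p a b s c' where v: "v = p @ a # b # s" and lp: "length p = j - 1" and ab: "lmult a b = Some c'"
    and u: "u = p @ c' # s"
    using contract_Some[OF j1 jl cu] by blast
  have jp: "j = Suc (length p)" "j - 1 = length p" using lp j1 by simp_all
  have va: "v ! (j - 1) = a" "v ! j = b" unfolding jp using v by (simp_all add: nth_append)
  have pu: "pl u = j - 1"
  proof (rule pl_eqI)
    show "j - 1 \<le> length u" using u lp by simp
    fix q assume q: "q < j - 1"
    have "u ! q = p ! q" using u lp q by (simp add: nth_append)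
    also have "\<dots> = v ! q" using v lp q by (simp add: nth_append)
    also have "\<dots> = cpat q" using pl_match[of q v] q j_def by simp
    finally show "u ! q = cpat q" .
  next
    have "u ! (j - 1) = c'" unfolding jp(2) using u by simp
    then show "u ! (j - 1) \<noteq> cpat (j - 1)" using lmult_Some[OF ab] pm va by auto
  qed
  have upu: "up u"
  proof -
    have ul: "j - 1 < length u" using u lp by simp
    have uc: "u ! (j - 1) = c'" unfolding jp(2) using u by simp
    have "((j - 1) mod 4 = 0 \<and> c' = XiL) \<or> ((j - 1) mod 4 = 2 \<and> c' = Xi)"
    proof (cases "j mod 4 = 1")
      case True
      then have "(j - 1) mod 4 = 0" by (rule mod_pred0)
      moreover have "c' = XiL" using cases True va ab by simp
      ultimately show ?thesis by simp
    next
      case False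
      then have m3: "j mod 4 = 3" using m by simp
      then have "(j - 1) mod 4 = 2" by (rule mod_pred2)
      moreover have "c' = Xi" using cases m3 va ab by simp
      ultimately show ?thesis by simp
    qed
    then show ?thesis unfolding up_def pu using ul uc by simp
  qed
  have "(j = Suc (pl u) \<and> v = Pw u) \<or> (pl v < pl u \<and> pl v < length v) \<or> (up v \<and> pl v = pl u)"
    by (rule lemC[OF upu j1 jl cu])
  moreover have "\<not> (pl v < pl u)" using pu j_def by simp
  moreover have "\<not> up v" by (rule assms(3))
  ultimately have "v = Pw u" by blast
  then show ?thesis using cu j1 upu pu unfolding j_def by blast
qed


lemma m1pow_nz: "(-1::'k::field) ^ n \<noteq> 0" by (simp add: power_eq_0_iff)

lemma bdry_diff: "bdry (\<lambda>w. c1 w - c2 w) = (\<lambda>w. bdry c1 w - bdry (c2 :: letter list \<Rightarrow> 'k::field) w)"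
  unfolding bdry_def by (simp add: left_diff_distrib sum_subtractf)

lemma bdry_add: "bdry (\<lambda>w. c1 w + c2 w) = (\<lambda>w. bdry c1 w + bdry (c2 :: letter list \<Rightarrow> 'k::field) w)"
  unfolding bdry_def by (simp add: distrib_right sum.distrib)

lemma bdry_smult: "bdry (\<lambda>w. a * c w) = (\<lambda>w. a * bdry (c :: letter list \<Rightarrow> 'k::field) w)"
  unfolding bdry_def by (simp add: sum_distrib_left mult.assoc)

lemma bdry_zero: "bdry (\<lambda>w. 0) = (\<lambda>w. 0 :: 'k::field)"
  unfolding bdry_def by simp

lemma chains_diff: "c1 \<in> chains n m \<Longrightarrow> c2 \<in> chains n m \<Longrightarrow> (\<lambda>w. c1 w - c2 w) \<in> chains n m"
  unfolding chains_def mem_Collect_eq by force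
lemma chains_add: "c1 \<in> chains n m \<Longrightarrow> c2 \<in> chains n m \<Longrightarrow> (\<lambda>w. c1 w + c2 w) \<in> chains n m"
  unfolding chains_def mem_Collect_eq by force
lemma chains_smult: "c \<in> chains n m \<Longrightarrow> (\<lambda>w. a * c w) \<in> chains n m"
  unfolding chains_def by simp
lemma chains_zero: "(\<lambda>w. 0) \<in> chains n m"
  unfolding chains_def by simp

lemma bdry_chains:
  fixes c :: "letter list \<Rightarrow> 'k::field"
  assumes "c \<in> chains (Suc n) m"
  shows "bdry c \<in> chains n m"
  unfolding chains_def mem_Collect_eq
proof (intro allI impI)
  fix w assume "bdry c w \<noteq> 0"
  then obtain v where v: "v \<in> {v. length v = Suc (length w) \<and> valid_word v}" and nz: "c v * incidence v w \<noteq> 0"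
    unfolding bdry_def by (blast elim: sum.not_neutral_contains_not_neutral)
  have cv: "c v \<noteq> 0" "incidence v w \<noteq> (0::'k)" using nz by auto
  then have vb: "v \<in> basis_words (Suc n) m" using assms unfolding chains_def by blast
  have "(\<Sum>i\<in>{1..<length v}. if contract v i = Some w then (-1) ^ i else (0::'k)) \<noteq> 0"
    using cv(2) unfolding incidence_def .
  then obtain i where i: "i \<in> {1..<length v}" and ci0: "(if contract v i = Some w then (-1) ^ i else (0::'k)) \<noteq> 0"
    by (rule sum.not_neutral_contains_not_neutral)
  have ci: "contract v i = Some w" using ci0 by (auto split: if_splits)
  have "valid_word w = valid_word v \<and> length w = length v - 1 \<and> word_deg w = word_deg v"
    by (rule contract_props) (use i ci in auto)
  then show "w \<in> basis_words n m" using vb unfolding basis_words_def by auto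
qed

lemma reduce:
  assumes "z \<in> chains n m"
  shows "\<exists>b \<in> chains (Suc n) m. \<forall>w. up w \<and> pl w < k \<longrightarrow> z w - bdry b w = (0::'k::field)"
proof (induction k)
  case 0
  show ?case using chains_zero by blast
next
  case (Suc k)
  then obtain b where b: "b \<in> chains (Suc n) m" and bz: "\<forall>w. up w \<and> pl w < k \<longrightarrow> z w - bdry b w = (0::'k)"
    by blast
  define z1 where "z1 = (\<lambda>w. z w - bdry b w)"
  have z1c: "z1 \<in> chains n m" unfolding z1_def by (rule chains_diff[OF assms bdry_chains[OF b]])
  define U where "U = {w \<in> basis_words n m. up w \<and> pl w = k}"
  define sg :: 'k where "sg = (-1) ^ Suc k"
  have sg2: "sg * sg = 1" unfolding sg_def by (simp add: power_mult_distrib[symmetric])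
  have finU: "finite U" unfolding U_def using finite_basis by simp
  define b' where "b' = (\<lambda>v. \<Sum>w\<in>U. if v = Pw w then sg * z1 w else 0)"
  have b'c: "b' \<in> chains (Suc n) m" unfolding chains_def mem_Collect_eq
  proof (intro allI impI)
    fix v assume "b' v \<noteq> 0"
    then obtain w where w: "w \<in> U" "(if v = Pw w then sg * z1 w else 0) \<noteq> 0"
      unfolding b'_def by (blast elim: sum.not_neutral_contains_not_neutral)
    then have vw: "v = Pw w" by (auto split: if_splits)
    have "up w" "w \<in> basis_words n m" using w(1) unfolding U_def by auto
    then show "v \<in> basis_words (Suc n) m" using Pw_props[of w] vw unfolding basis_words_def by auto
  qed
  have bb': "bdry b' w2 = (if w2 \<in> U then z1 w2 else 0)" if w2: "up w2" "pl w2 \<le> k" for w2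
  proof -
    define V where "V = {v. length v = Suc (length w2) \<and> valid_word v}"
    have finV: "finite V" unfolding V_def by (rule finite_len)
    have "bdry b' w2 = (\<Sum>v\<in>V. (\<Sum>w\<in>U. if v = Pw w then sg * z1 w else 0) * incidence v w2)"
      unfolding bdry_def b'_def V_def ..
    also have "\<dots> = (\<Sum>v\<in>V. \<Sum>w\<in>U. if v = Pw w then sg * z1 w * incidence v w2 else 0)"
      by (simp add: sum_distrib_right mult_if0)
    also have "\<dots> = (\<Sum>w\<in>U. \<Sum>v\<in>V. if v = Pw w then sg * z1 w * incidence v w2 else 0)"
      by (rule sum.swap)
    also have "\<dots> = (\<Sum>w\<in>U. if w = w2 then z1 w2 else 0)"
    proof (rule sum.cong[OF refl])
      fix w assume wU: "w \<in> U"
      then have uw: "up w" "pl w = k" "w \<in> basis_words n m" unfolding U_def by auto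
      have inc: "incidence (Pw w) w2 = (if w2 = w then (-1) ^ Suc (pl w) else (0::'k))"
        by (rule incP[OF uw(1) w2(1)]) (use w2 uw in simp)
      show "(\<Sum>v\<in>V. if v = Pw w then sg * z1 w * incidence v w2 else 0) = (if w = w2 then z1 w2 else 0)"
      proof (cases "w = w2")
        case True
        have "Pw w \<in> V" using Pw_props[OF uw(1)] uw(3) True unfolding V_def basis_words_def by auto
        then have "(\<Sum>v\<in>V. if v = Pw w then sg * z1 w * incidence v w2 else 0) = sg * z1 w * incidence (Pw w) w2"
          using finV by (simp add: sum.delta')
        also have "\<dots> = z1 w2" using inc True uw(2) sg2 unfolding sg_def
          by (simp add: power_mult_distrib[symmetric])
        finally show ?thesis using True by simp
      next
        case False
        have "(\<Sum>v\<in>V. if v = Pw w then sg * z1 w * incidence v w2 else 0) = 0"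
          by (rule sum.neutral) (use inc False in auto)
        then show ?thesis using False by simp
      qed
    qed
    also have "\<dots> = (if w2 \<in> U then z1 w2 else 0)"
      using finU by (simp add: sum.delta')
    finally show ?thesis .
  qed
  have bc: "(\<lambda>v. b v + b' v) \<in> chains (Suc n) m" by (rule chains_add[OF b b'c])
  show ?case
  proof (rule bexI[OF _ bc], intro allI impI)
    fix w2 assume w2: "up w2 \<and> pl w2 < Suc k"
    have e: "z w2 - bdry (\<lambda>v. b v + b' v) w2 = z1 w2 - bdry b' w2"
      unfolding bdry_add z1_def by simp
    show "z w2 - bdry (\<lambda>v. b v + b' v) w2 = 0"
    proof (cases "pl w2 < k")
      case True
      have "w2 \<notin> U" using True unfolding U_def by auto
      then show ?thesis unfolding e using bb'[of w2] w2 True bz unfolding z1_def by auto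
    next
      case False
      then have pk: "pl w2 = k" using w2 by simp
      show ?thesis
      proof (cases "w2 \<in> U")
        case True then show ?thesis unfolding e using bb'[of w2] w2 pk by simp
      next
        case False
        then have "w2 \<notin> basis_words n m" using w2 pk unfolding U_def by auto
        then have "z1 w2 = 0" using z1c unfolding chains_def by blast
        then show ?thesis unfolding e using bb'[of w2] w2 pk False by simp
      qed
    qed
  qed
qed

lemma nodown:
  assumes zc: "z \<in> chains n m" and zu: "\<And>w. up w \<Longrightarrow> z w = 0" and bu: "\<And>w. up w \<Longrightarrow> bdry z w = (0::'k::field)"
  shows "z v \<noteq> 0 \<Longrightarrow> pl v = length v"
proof (rule ccontr)
  assume zv: "z v \<noteq> 0" and ne: "pl v \<noteq> length v"
  have "pl v < length v" using ne pl_le[of v] by simp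
  then obtain v0 where v0: "z v0 \<noteq> 0 \<and> pl v0 < length v0"
    and mn: "\<forall>y. z y \<noteq> 0 \<and> pl y < length y \<longrightarrow> pl v0 \<le> pl y"
    using ex_has_least_nat[of "\<lambda>y. z y \<noteq> 0 \<and> pl y < length y" v pl] zv by blast
  have vb: "v0 \<in> basis_words n m" using v0 zc unfolding chains_def by blast
  then have val: "valid_word v0" unfolding basis_words_def by simp
  have nup: "\<not> up v0" using zu v0 by blast
  obtain u where u: "up u" "contract v0 (pl v0) = Some u" "pl u = pl v0 - 1" "1 \<le> pl v0" "v0 = Pw u"
    using down_dec[OF val _ nup] v0 by blast
  define V where "V = {y. length y = Suc (length u) \<and> valid_word y}"
  have finV: "finite V" unfolding V_def by (rule finite_len)
  have v0V: "v0 \<in> V" using val Pw_props(4)[OF u(1)] u(5) unfolding V_def by simp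
  have inc0: "incidence v0 u = (-1::'k) ^ Suc (pl u)"
    using incP[OF u(1) u(1)] u(5) by simp
  have others: "z y * incidence y u = 0" if y: "y \<in> V" "y \<noteq> v0" for y
  proof (cases "z y = 0")
    case False
    have "incidence y u = (0::'k)" unfolding incidence_def
    proof (intro sum.neutral ballI)
      fix i assume i: "i \<in> {1..<length y}"
      have "contract y i \<noteq> Some u"
      proof
        assume c: "contract y i = Some u"
        have i1: "1 \<le> i" "i < length y" using i by auto
        have "(i = Suc (pl u) \<and> y = Pw u) \<or> (pl y < pl u \<and> pl y < length y) \<or> (up y \<and> pl y = pl u)"
          by (rule lemC[OF u(1) i1 c])
        moreover have "\<not> (pl y < pl u \<and> pl y < length y)" using mn False u(3,4) by fastforce
        moreover have "\<not> up y" using zu False by blast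
        ultimately have "y = Pw u" by blast
        then show False using y u(5) by simp
      qed
      then show "(if contract y i = Some u then (-1) ^ i else (0::'k)) = 0" by simp
    qed
    then show ?thesis by simp
  qed simp
  have "bdry z u = (\<Sum>y\<in>V. z y * incidence y u)" unfolding bdry_def V_def ..
  also have "\<dots> = z v0 * incidence v0 u"
    by (rule sum.remove[OF finV v0V, THEN trans]) (simp add: others sum.neutral)
  finally have "bdry z u = z v0 * incidence v0 u" .
  moreover have "incidence v0 u \<noteq> (0::'k)" using inc0 m1pow_nz[where 'k='k] by simp
  ultimately have "bdry z u \<noteq> 0" using v0 by simp
  then show False using bu[OF u(1)] by simp
qed


definition cw :: "nat \<Rightarrow> letter list" where "cw n = map cpat [0..<n]"

lemma cw_len[simp]: "length (cw n) = n" unfolding cw_def by simp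
lemma cw_nth: "q < n \<Longrightarrow> cw n ! q = cpat q" unfolding cw_def by simp

lemma pl_cw: "pl (cw n) = n"
  by (rule pl_eqI) (auto simp: cw_nth)

lemma cw_not_up: "\<not> up (cw n)" unfolding up_def pl_cw by simp

lemma crit_eq: "pl v = length v \<Longrightarrow> v = cw (length v)"
  by (rule nth_equalityI) (auto simp: cw_nth pl_match)

lemma ridem_cpat: "ridem (cpat q) = (if q mod 4 = 0 \<or> q mod 4 = 1 then IdO else IdL)"
  unfolding cpat_def by auto
lemma lidem_cpat: "lidem (cpat q) = (if q mod 4 = 1 \<or> q mod 4 = 2 then IdO else IdL)"
  unfolding cpat_def by auto

lemma mod4_cases: "(q::nat) mod 4 = 0 \<or> q mod 4 = 1 \<or> q mod 4 = 2 \<or> q mod 4 = 3" by auto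

lemma comp_cpat: "ridem (cpat q) = lidem (cpat (Suc q))"
  using mod4_cases[of q] unfolding ridem_cpat lidem_cpat by (auto simp: mod_Suc)

lemma cw_valid_iff: "valid_word (cw n) \<longleftrightarrow> n mod 4 = 1 \<or> n mod 4 = 2"
proof (cases n)
  case 0
  then show ?thesis unfolding valid_word_def cw_def by simp
next
  case (Suc n')
  have ne: "cw n \<noteq> []" using Suc by (metis cw_len list.size(3) nat.simps(3))
  have hd: "lidem (hd (cw n)) = IdL" using ne Suc by (simp add: hd_conv_nth cw_nth cpat_def)
  have lst: "last (cw n) = cpat n'" using ne Suc by (simp add: last_conv_nth cw_nth)
  have ch: "\<forall>i. Suc i < length (cw n) \<longrightarrow> ridem (cw n ! i) = lidem (cw n ! Suc i)"
    by (auto simp: cw_nth comp_cpat)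
  have "ridem (cpat n') = IdO \<longleftrightarrow> n mod 4 = 1 \<or> n mod 4 = 2"
    using mod4_cases[of n'] Suc unfolding ridem_cpat by (auto simp: mod_Suc)
  then show ?thesis unfolding valid_word_def using ne hd lst ch by simp
qed

lemma deg_cw: "word_deg (cw n) = 3 * int (n div 4) + (if n mod 4 = 3 then 2 else int (n mod 4))"
proof (induction n)
  case 0 then show ?case by (simp add: cw_def word_deg_def)
next
  case (Suc n)
  have e: "word_deg (cw (Suc n)) = word_deg (cw n) + ldeg (cpat n)"
    unfolding cw_def word_deg_def by simp
  show ?case unfolding e Suc using mod4_cases[of n]
    by (auto simp: cpat_def mod_Suc div_Suc)
qed

lemma crit_t: "cw n \<in> basis_words n (int n - int t) \<longleftrightarrow> ((n mod 4 = 1 \<or> n mod 4 = 2) \<and> n div 4 = t)"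
proof -
  have nn: "int n = 4 * int (n div 4) + int (n mod 4)" by (simp add: zdiv_int zmod_int)
  have b: "cw n \<in> basis_words n (int n - int t) \<longleftrightarrow> valid_word (cw n) \<and> word_deg (cw n) = int n - int t"
    unfolding basis_words_def by simp
  show ?thesis
  proof (cases "n mod 4 = 1 \<or> n mod 4 = 2")
    case True
    have "word_deg (cw n) = 3 * int (n div 4) + int (n mod 4)" using True deg_cw[of n] by auto
    then show ?thesis unfolding b using True cw_valid_iff[of n] nn by auto
  next
    case False
    then show ?thesis unfolding b using cw_valid_iff[of n] by simp
  qed
qed

lemma cw_contract_None:
  assumes "1 \<le> i" "i < n"
  shows "contract (cw n) i = None"
proof -
  obtain i' where i: "i = Suc i'" using assms by (cases i) auto
  have "lmult (cpat i') (cpat (Suc i')) = None"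
    using mod4_cases[of i'] by (auto simp: cpat_def mod_Suc)
  then show ?thesis unfolding contract_def using assms i by (simp add: cw_nth)
qed

lemma inc_cw: "incidence (cw n) w = (0::'k::field)"
  unfolding incidence_def by (intro sum.neutral) (auto simp: cw_contract_None)

lemma bnd_diff: "x \<in> boundaries n m \<Longrightarrow> y \<in> boundaries n m \<Longrightarrow> (\<lambda>w. x w - y w) \<in> boundaries n m"
  unfolding boundaries_def
proof -
  assume "x \<in> bdry ` chains (Suc n) m" "y \<in> bdry ` chains (Suc n) m"
  then obtain b1 b2 where "b1 \<in> chains (Suc n) m" "b2 \<in> chains (Suc n) m" "x = bdry b1" "y = bdry b2" by blast
  then show "(\<lambda>w. x w - y w) \<in> bdry ` chains (Suc n) m"
    by (intro image_eqI[where x = "\<lambda>w. b1 w - b2 w"]) (simp_all add: bdry_diff chains_diff)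
qed

lemma bnd_add: "x \<in> boundaries n m \<Longrightarrow> y \<in> boundaries n m \<Longrightarrow> (\<lambda>w. x w + y w) \<in> boundaries n m"
  unfolding boundaries_def
proof -
  assume "x \<in> bdry ` chains (Suc n) m" "y \<in> bdry ` chains (Suc n) m"
  then obtain b1 b2 where "b1 \<in> chains (Suc n) m" "b2 \<in> chains (Suc n) m" "x = bdry b1" "y = bdry b2" by blast
  then show "(\<lambda>w. x w + y w) \<in> bdry ` chains (Suc n) m"
    by (intro image_eqI[where x = "\<lambda>w. b1 w + b2 w"]) (simp_all add: bdry_add chains_add)
qed

lemma bnd_smult: "x \<in> boundaries n m \<Longrightarrow> (\<lambda>w. a * x w) \<in> boundaries n m"
  unfolding boundaries_def
proof -
  assume "x \<in> bdry ` chains (Suc n) m"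
  then obtain b1 where "b1 \<in> chains (Suc n) m" "x = bdry b1" by blast
  then show "(\<lambda>w. a * x w) \<in> bdry ` chains (Suc n) m"
    by (intro image_eqI[where x = "\<lambda>w. a * b1 w"]) (simp_all add: bdry_smult chains_smult)
qed

lemma bnd_zero: "(\<lambda>w. 0::'k::field) \<in> boundaries n m"
  unfolding boundaries_def by (intro image_eqI[where x = "\<lambda>w. 0"]) (simp_all add: bdry_zero chains_zero)

lemma bnd_cong: "x \<in> boundaries n m \<Longrightarrow> (\<And>w. y w = x w) \<Longrightarrow> y \<in> boundaries n m"
proof -
  assume "x \<in> boundaries n m" "\<And>w. y w = x w"
  moreover have "y = x" using calculation(2) by (rule ext)
  ultimately show ?thesis by simp
qed

lemma cyc_add:
  assumes "x \<in> cycles n m" "y \<in> cycles n m" shows "(\<lambda>w. x w + y w) \<in> cycles n m"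
proof -
  have "x \<in> chains n m" "y \<in> chains n m" "bdry x = (\<lambda>_. 0)" "bdry y = (\<lambda>_. 0)" using assms unfolding cycles_def by auto
  then show ?thesis unfolding cycles_def using chains_add[of x n m y] bdry_add[of x y] by simp
qed

lemma cyc_smult:
  assumes "x \<in> cycles n m" shows "(\<lambda>w. a * x w) \<in> cycles n m"
proof -
  have "x \<in> chains n m" "bdry x = (\<lambda>_. 0)" using assms unfolding cycles_def by auto
  then show ?thesis unfolding cycles_def using chains_smult[of x n m a] bdry_smult[of a x] by simp
qed

lemma cyc_zero: "(\<lambda>w. 0::'k::field) \<in> cycles n m"
  unfolding cycles_def chains_def bdry_def by simp

lemma bnd_cyc: "x \<in> boundaries n m \<Longrightarrow> (2::'k::field) \<noteq> 0 \<Longrightarrow> (x :: letter list \<Rightarrow> 'k) \<in> cycles n m"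
  unfolding boundaries_def cycles_def using bdry_chains bdry_bdry by blast

lemma kill_up:
  assumes "z \<in> chains n m" "\<forall>w. up w \<and> pl w < Suc n \<longrightarrow> z w = (0::'k::field)"
  shows "up w \<Longrightarrow> z w = 0"
proof -
  assume u: "up w"
  show ?thesis
  proof (cases "w \<in> basis_words n m")
    case True
    then have "pl w < Suc n" using u unfolding up_def basis_words_def by auto
    then show ?thesis using assms(2) u by blast
  next
    case False then show ?thesis using assms(1) unfolding chains_def by blast
  qed
qed

lemma cyc_red:
  assumes two: "(2::'k::field) \<noteq> 0" and z: "z \<in> cycles n m"
  shows "\<exists>b\<in>chains (Suc n) m. \<forall>w. z w - bdry b w \<noteq> (0::'k) \<longrightarrow> w = cw n \<and> cw n \<in> basis_words n m"
proof -
  have zc: "z \<in> chains n m" and bz: "bdry z = (\<lambda>_. 0)" using z unfolding cycles_def by auto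
  obtain b where b: "b \<in> chains (Suc n) m" and bp: "\<forall>w. up w \<and> pl w < Suc n \<longrightarrow> z w - bdry b w = (0::'k)"
    using reduce[OF zc, of "Suc n"] by blast
  define z1 where "z1 = (\<lambda>w. z w - bdry b w)"
  have z1c: "z1 \<in> chains n m" unfolding z1_def by (rule chains_diff[OF zc bdry_chains[OF b]])
  have zu: "z1 w = 0" if "up w" for w by (rule kill_up[OF z1c _ that]) (use bp in \<open>simp add: z1_def\<close>)
  have bz1: "bdry z1 = (\<lambda>_. 0)" unfolding z1_def bdry_diff bz bdry_bdry[OF two] by simp
  show ?thesis
  proof (rule bexI[OF _ b], intro allI impI)
    fix w assume "z w - bdry b w \<noteq> 0"
    then have nz: "z1 w \<noteq> 0" unfolding z1_def .
    have bu: "\<And>w. up w \<Longrightarrow> bdry z1 w = 0" using bz1 by simp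
    have "pl w = length w" by (rule nodown[OF z1c zu bu nz])
    moreover have wb: "w \<in> basis_words n m" using nz z1c unfolding chains_def by blast
    ultimately have "w = cw n" using crit_eq[of w] unfolding basis_words_def by auto
    then show "w = cw n \<and> cw n \<in> basis_words n m" using wb by simp
  qed
qed

lemma hom_zero:
  assumes two: "(2::'k::field) \<noteq> 0" and nc: "\<not> ((n mod 4 = 1 \<or> n mod 4 = 2) \<and> n div 4 = t)"
  shows "homology_zero TYPE('k) n (int n - int t)"
proof -
  define m where "m = int n - int t"
  have ncw: "cw n \<notin> basis_words n m" using crit_t[of n t] nc unfolding m_def by simp
  have zb: "(z :: letter list \<Rightarrow> 'k) \<in> boundaries n m" if zc: "z \<in> cycles n m" for z
  proof -
    obtain b where b: "b \<in> chains (Suc n) m" and bp: "\<forall>w. z w - bdry b w \<noteq> (0::'k) \<longrightarrow> w = cw n \<and> cw n \<in> basis_words n m"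
      using cyc_red[OF two zc] by blast
    have "z w = bdry b w" for w using bp ncw by (metis eq_iff_diff_eq_0)
    then have "z = bdry b" by (rule ext)
    then show ?thesis unfolding boundaries_def using b by simp
  qed
  have hc: "hclass n m z = (cycles n m :: (letter list \<Rightarrow> 'k) set)" if "z \<in> cycles n m" for z
    unfolding hclass_def using zb that bnd_diff by blast
  have "(homology n m :: (letter list \<Rightarrow> 'k) set set) = {cycles n m}"
    unfolding homology_def using hc cyc_zero[of n m] by (auto simp: image_iff)
  then show ?thesis unfolding homology_zero_def m_def by simp
qed


lemma hom_iso:
  assumes two: "(2::'k::field) \<noteq> 0" and nc: "n mod 4 = 1 \<or> n mod 4 = 2" and nt: "n div 4 = t"
  shows "homology_iso_field TYPE('k) n (int n - int t)"
proof -
  define m where "m = int n - int t"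
  define c :: "letter list \<Rightarrow> 'k" where "c = (\<lambda>w. if w = cw n then 1 else 0)"
  define B where "B = (boundaries n m :: (letter list \<Rightarrow> 'k) set)"
  define Z where "Z = (cycles n m :: (letter list \<Rightarrow> 'k) set)"
  have Bcong: "y \<in> B" if "x \<in> B" "\<And>w. y w = x w" for x y
    using that unfolding B_def by (rule bnd_cong)
  have cwb: "cw n \<in> basis_words n m" using crit_t[of n t] nc nt unfolding m_def by simp
  have cZ: "c \<in> Z"
  proof -
    have "c \<in> chains n m" unfolding chains_def c_def using cwb by simp
    moreover have "bdry c = (\<lambda>_. 0)"
    proof
      fix w
      show "bdry c w = 0" unfolding bdry_def c_def
        by (intro sum.neutral) (simp add: inc_cw)
    qed
    ultimately show ?thesis unfolding Z_def cycles_def by simp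
  qed
  have dec: "\<exists>a. (\<lambda>w. z w - a * c w) \<in> B" if zZ: "z \<in> Z" for z
  proof -
    obtain b where b: "b \<in> chains (Suc n) m" and bp: "\<forall>w. z w - bdry b w \<noteq> (0::'k) \<longrightarrow> w = cw n \<and> cw n \<in> basis_words n m"
      using cyc_red[OF two zZ[unfolded Z_def]] by blast
    define a where "a = z (cw n) - bdry b (cw n)"
    have "z w - a * c w = bdry b w" for w
      using bp[rule_format, of w] unfolding a_def c_def by (cases "w = cw n") auto
    then have "(\<lambda>w. z w - a * c w) = bdry b" by (rule ext)
    then show ?thesis unfolding B_def boundaries_def using b by blast
  qed
  have uniq0: "a = 0" if aB: "(\<lambda>w. a * c w) \<in> B" for a
  proof -
    obtain b where b: "b \<in> chains (Suc n) m" and ab: "(\<lambda>w. a * c w) = bdry b"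
      using aB unfolding B_def boundaries_def by blast
    obtain e where e: "e \<in> chains (Suc (Suc n)) m" and ep: "\<forall>w. up w \<and> pl w < Suc (Suc n) \<longrightarrow> b w - bdry e w = (0::'k)"
      using reduce[OF b, of "Suc (Suc n)"] by blast
    define b1 where "b1 = (\<lambda>w. b w - bdry e w)"
    have b1c: "b1 \<in> chains (Suc n) m" unfolding b1_def by (rule chains_diff[OF b bdry_chains[OF e]])
    have bu: "b1 w = 0" if "up w" for w by (rule kill_up[OF b1c _ that]) (use ep in \<open>simp add: b1_def\<close>)
    have bb1: "bdry b1 = bdry b" unfolding b1_def bdry_diff bdry_bdry[OF two] by simp
    have bbu: "bdry b1 w = 0" if "up w" for w
    proof -
      have "w \<noteq> cw n" using that cw_not_up by blast
      have "bdry b w = a * c w" using fun_cong[OF ab, of w] by simp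
      then show ?thesis using bb1 \<open>w \<noteq> cw n\<close> unfolding c_def by simp
    qed
    have b10: "b1 w = 0" for w
    proof (rule ccontr)
      assume nz: "b1 w \<noteq> 0"
      have "pl w = length w" by (rule nodown[OF b1c bu bbu nz])
      moreover have wb: "w \<in> basis_words (Suc n) m" using nz b1c unfolding chains_def by blast
      ultimately have "w = cw (Suc n)" using crit_eq[of w] unfolding basis_words_def by auto
      then have "cw (Suc n) \<in> basis_words (Suc n) (int (Suc n) - int (Suc t))" using wb unfolding m_def by simp
      then have "(Suc n mod 4 = 1 \<or> Suc n mod 4 = 2) \<and> Suc n div 4 = Suc t" by (rule crit_t[THEN iffD1])
      then show False using nc nt by (auto simp: mod_Suc div_Suc split: if_splits)
    qed
    have "b1 = (\<lambda>w. 0)" using b10 by (rule ext)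
    then have "bdry b = bdry (\<lambda>w. 0::'k)" using bb1 by simp
    then have "bdry b = (\<lambda>w. 0::'k)" by (simp add: bdry_zero)
    then have "a * c (cw n) = 0" using fun_cong[OF ab, of "cw n"] by simp
    then show ?thesis unfolding c_def by simp
  qed
  have uniq: "a = a'" if "(\<lambda>w. z w - a * c w) \<in> B" "(\<lambda>w. z w - a' * c w) \<in> B" for z a a'
  proof -
    have "(\<lambda>w. (z w - a * c w) - (z w - a' * c w)) \<in> B" using bnd_diff that unfolding B_def by blast
    then have "(\<lambda>w. (a' - a) * c w) \<in> B" by (rule Bcong) (simp add: algebra_simps)
    then have "a' - a = 0" by (rule uniq0)
    then show ?thesis by simp
  qed
  define \<alpha> where "\<alpha> z = (THE a. (\<lambda>w. z w - a * c w) \<in> B)" for z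
  have \<alpha>B: "(\<lambda>w. z w - \<alpha> z * c w) \<in> B" if zZ: "z \<in> Z" for z
  proof -
    obtain a where a: "(\<lambda>w. z w - a * c w) \<in> B" using dec[OF zZ] by blast
    have "\<alpha> z = a" unfolding \<alpha>_def
    proof (rule the_equality)
      show "(\<lambda>w. z w - a * c w) \<in> B" by (rule a)
    next
      fix x assume "(\<lambda>w. z w - x * c w) \<in> B"
      then show "x = a" using uniq[OF _ a] by blast
    qed
    then show ?thesis using a by simp
  qed
  have \<alpha>eq: "\<alpha> z = a" if "z \<in> Z" "(\<lambda>w. z w - a * c w) \<in> B" for z a
    using uniq[OF \<alpha>B[OF that(1)] that(2)] .
  define \<phi> where "\<phi> S = \<alpha> (SOME z. z \<in> S)" for S :: "(letter list \<Rightarrow> 'k) set"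
  have hcl: "hclass n m z = {z' \<in> Z. (\<lambda>w. z w - z' w) \<in> B}" for z unfolding hclass_def Z_def B_def ..
  have self: "z \<in> hclass n m z" if "z \<in> Z" for z
    unfolding hcl using that bnd_zero[of n m] unfolding B_def by simp
  have \<phi>h: "\<phi> (hclass n m z) = \<alpha> z" if zZ: "z \<in> Z" for z
  proof -
    have "(SOME z'. z' \<in> hclass n m z) \<in> hclass n m z" using self[OF zZ] by (rule someI[where P = "\<lambda>z'. z' \<in> hclass n m z"])
    then obtain z' where z': "(SOME z'. z' \<in> hclass n m z) = z'" "z' \<in> Z" "(\<lambda>w. z w - z' w) \<in> B"
      unfolding hcl by blast
    have "(\<lambda>w. (z' w - \<alpha> z * c w)) \<in> B"
    proof -
      have "(\<lambda>w. (z w - \<alpha> z * c w) - (z w - z' w)) \<in> B" using bnd_diff \<alpha>B[OF zZ] z'(3) unfolding B_def by blast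
      then show ?thesis by (rule Bcong) (simp add: algebra_simps)
    qed
    then have "\<alpha> z' = \<alpha> z" by (rule \<alpha>eq[OF z'(2)])
    then show ?thesis unfolding \<phi>_def z'(1) .
  qed
  have H: "homology n m = hclass n m ` Z" unfolding homology_def Z_def ..
  have inj: "inj_on \<phi> (homology n m)"
  proof (rule inj_onI)
    fix S1 S2 assume S: "S1 \<in> homology n m" "S2 \<in> homology n m" "\<phi> S1 = \<phi> S2"
    then obtain z1 z2 where z: "z1 \<in> Z" "z2 \<in> Z" "S1 = hclass n m z1" "S2 = hclass n m z2" unfolding H by blast
    have "\<alpha> z1 = \<alpha> z2" using S(3) \<phi>h z by simp
    then have d: "(\<lambda>w. z1 w - z2 w) \<in> B"
    proof -
      assume eq: "\<alpha> z1 = \<alpha> z2"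
      have "(\<lambda>w. (z1 w - \<alpha> z1 * c w) - (z2 w - \<alpha> z2 * c w)) \<in> B" using bnd_diff \<alpha>B z(1,2) unfolding B_def by blast
      then show ?thesis by (rule Bcong) (simp add: eq algebra_simps)
    qed
    have "hclass n m z1 = hclass n m z2"
    proof (rule set_eqI)
      fix x
      have i1: "(\<lambda>w. z2 w - x w) \<in> B" if "(\<lambda>w. z1 w - x w) \<in> B"
      proof -
        have "(\<lambda>w. (z1 w - x w) - (z1 w - z2 w)) \<in> B" using bnd_diff that d unfolding B_def by blast
        then show ?thesis by (rule Bcong) (simp add: algebra_simps)
      qed
      have i2: "(\<lambda>w. z1 w - x w) \<in> B" if "(\<lambda>w. z2 w - x w) \<in> B"
      proof -
        have "(\<lambda>w. (z2 w - x w) + (z1 w - z2 w)) \<in> B" using bnd_add that d unfolding B_def by blast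
        then show ?thesis by (rule Bcong) (simp add: algebra_simps)
      qed
      show "x \<in> hclass n m z1 \<longleftrightarrow> x \<in> hclass n m z2" unfolding hcl using i1 i2 by blast
    qed
    then show "S1 = S2" using z by simp
  qed
  have surj: "\<phi> ` homology n m = UNIV"
  proof (rule set_eqI, rule iffI)
    fix a :: 'k
    have acZ: "(\<lambda>w. a * c w) \<in> Z" using cyc_smult cZ unfolding Z_def by blast
    have "(\<lambda>w. a * c w - a * c w) \<in> B" using bnd_zero[of n m] unfolding B_def by simp
    then have "\<alpha> (\<lambda>w. a * c w) = a" by (rule \<alpha>eq[OF acZ])
    then have e1: "a = \<phi> (hclass n m (\<lambda>w. a * c w))" using \<phi>h[OF acZ] by simp
    have e2: "hclass n m (\<lambda>w. a * c w) \<in> homology n m" unfolding H using acZ by blast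
    show "a \<in> \<phi> ` homology n m" using e1 e2 by blast
  qed simp
  have add: "\<phi> (hclass n m (\<lambda>w. x w + y w)) = \<phi> (hclass n m x) + \<phi> (hclass n m y)"
    if "x \<in> Z" "y \<in> Z" for x y
  proof -
    have xy: "(\<lambda>w. x w + y w) \<in> Z" using cyc_add that unfolding Z_def by blast
    have "(\<lambda>w. (x w - \<alpha> x * c w) + (y w - \<alpha> y * c w)) \<in> B" using bnd_add \<alpha>B that unfolding B_def by blast
    then have "(\<lambda>w. (x w + y w) - (\<alpha> x + \<alpha> y) * c w) \<in> B" by (rule Bcong) (simp add: algebra_simps)
    then have "\<alpha> (\<lambda>w. x w + y w) = \<alpha> x + \<alpha> y" by (rule \<alpha>eq[OF xy])
    then show ?thesis using \<phi>h xy that by simp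
  qed
  have smul: "\<phi> (hclass n m (\<lambda>w. a * x w)) = a * \<phi> (hclass n m x)" if "x \<in> Z" for a x
  proof -
    have ax: "(\<lambda>w. a * x w) \<in> Z" using cyc_smult that unfolding Z_def by blast
    have "(\<lambda>w. a * (x w - \<alpha> x * c w)) \<in> B" using bnd_smult \<alpha>B that unfolding B_def by blast
    then have "(\<lambda>w. a * x w - (a * \<alpha> x) * c w) \<in> B" by (rule Bcong) (simp add: algebra_simps)
    then have "\<alpha> (\<lambda>w. a * x w) = a * \<alpha> x" by (rule \<alpha>eq[OF ax])
    then show ?thesis using \<phi>h ax that by simp
  qed
  have bij: "bij_betw \<phi> (homology n m) UNIV" unfolding bij_betw_def using inj surj by simp
  show ?thesis unfolding homology_iso_field_def m_def[symmetric]
  proof (intro exI[of _ \<phi>] conjI ballI allI)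
    show "bij_betw \<phi> (homology n m) UNIV" by (rule bij)
  next
    fix x y :: "letter list \<Rightarrow> 'k" assume "x \<in> cycles n m" "y \<in> cycles n m"
    then show "\<phi> (hclass n m (\<lambda>w. x w + y w)) = \<phi> (hclass n m x) + \<phi> (hclass n m y)"
      using add unfolding Z_def by blast
  next
    fix a :: 'k and x :: "letter list \<Rightarrow> 'k" assume "x \<in> cycles n m"
    then show "\<phi> (hclass n m (\<lambda>w. a * x w)) = a * \<phi> (hclass n m x)"
      using smul unfolding Z_def by blast
  qed
qed


lemma dm4: assumes "(n::nat) div 4 = q" "n mod 4 = r" shows "n = 4 * q + r"
  using div_mult_mod_eq[of n 4] assms by linarith

lemma cset: "(n::nat) \<in> {4 * t + 1, 4 * t + 2} \<longleftrightarrow> (n mod 4 = 1 \<or> n mod 4 = 2) \<and> n div 4 = t"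
proof
  assume "n \<in> {4 * t + 1, 4 * t + 2}"
  moreover have "((4::nat) * t + 1) mod 4 = 1 \<and> (4 * t + 1) div 4 = t" by presburger
  moreover have "((4::nat) * t + 2) mod 4 = 2 \<and> (4 * t + 2) div 4 = t" by presburger
  ultimately show "(n mod 4 = 1 \<or> n mod 4 = 2) \<and> n div 4 = t" by blast
next
  assume h: "(n mod 4 = 1 \<or> n mod 4 = 2) \<and> n div 4 = t"
  then have "n = 4 * t + n mod 4" using dm4[of n t "n mod 4"] by simp
  then show "n \<in> {4 * t + 1, 4 * t + 2}" using h by auto
qed

theorem mainTheorem5:
  assumes "(2::'k::field) \<noteq> 0" and "(3::'k) \<noteq> 0"
  shows "\<forall>n::nat. n \<ge> 1 \<longrightarrow>
     (if n \<in> {1, 2} then homology_iso_field TYPE('k) n (int n)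
      else homology_zero TYPE('k) n (int n)) \<and>
     (if n \<in> {5, 6} then homology_iso_field TYPE('k) n (int n - 1)
      else homology_zero TYPE('k) n (int n - 1)) \<and>
     (if n \<in> {9, 10} then homology_iso_field TYPE('k) n (int n - 2)
      else homology_zero TYPE('k) n (int n - 2)) \<and>
     (if n \<in> {13, 14} then homology_iso_field TYPE('k) n (int n - 3)
      else homology_zero TYPE('k) n (int n - 3))"
proof (intro allI impI)
  fix n :: nat assume n1: "n \<ge> 1"
  have G: "if (n mod 4 = 1 \<or> n mod 4 = 2) \<and> n div 4 = t then homology_iso_field TYPE('k) n (int n - int t)
           else homology_zero TYPE('k) n (int n - int t)" for t
  proof (cases "(n mod 4 = 1 \<or> n mod 4 = 2) \<and> n div 4 = t")
    case True
    show ?thesis by (subst if_P[OF True]) (rule hom_iso[OF assms(1)], use True in simp_all)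
  next
    case False
    show ?thesis by (subst if_not_P[OF False]) (rule hom_zero[OF assms(1) False])
  qed
  have c0: "n \<in> {1, 2} \<longleftrightarrow> (n mod 4 = 1 \<or> n mod 4 = 2) \<and> n div 4 = 0" using cset[of n 0] by (simp add: numeral_2_eq_2)
  have c1: "n \<in> {5, 6} \<longleftrightarrow> (n mod 4 = 1 \<or> n mod 4 = 2) \<and> n div 4 = 1" using cset[of n 1] by simp
  have c2: "n \<in> {9, 10} \<longleftrightarrow> (n mod 4 = 1 \<or> n mod 4 = 2) \<and> n div 4 = 2" using cset[of n 2] by simp
  have c3: "n \<in> {13, 14} \<longleftrightarrow> (n mod 4 = 1 \<or> n mod 4 = 2) \<and> n div 4 = 3" using cset[of n 3] by simp
  have g0: "if n \<in> {1, 2} then homology_iso_field TYPE('k) n (int n) else homology_zero TYPE('k) n (int n)"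
    unfolding c0 using G[of 0] by (simp only: of_nat_0 diff_0_right)
  have g1: "if n \<in> {5, 6} then homology_iso_field TYPE('k) n (int n - 1) else homology_zero TYPE('k) n (int n - 1)"
    unfolding c1 using G[of 1] by (simp only: of_nat_1)
  have g2: "if n \<in> {9, 10} then homology_iso_field TYPE('k) n (int n - 2) else homology_zero TYPE('k) n (int n - 2)"
    unfolding c2 using G[of 2] by (simp only: of_nat_numeral)
  have g3: "if n \<in> {13, 14} then homology_iso_field TYPE('k) n (int n - 3) else homology_zero TYPE('k) n (int n - 3)"
    unfolding c3 using G[of 3] by (simp only: of_nat_numeral)
  show "(if n \<in> {1, 2} then homology_iso_field TYPE('k) n (int n)
      else homology_zero TYPE('k) n (int n)) \<and>
     (if n \<in> {5, 6} then homology_iso_field TYPE('k) n (int n - 1)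
      else homology_zero TYPE('k) n (int n - 1)) \<and>
     (if n \<in> {9, 10} then homology_iso_field TYPE('k) n (int n - 2)
      else homology_zero TYPE('k) n (int n - 2)) \<and>
     (if n \<in> {13, 14} then homology_iso_field TYPE('k) n (int n - 3)
      else homology_zero TYPE('k) n (int n - 3))"
    using g0 g1 g2 g3 by blast
qed


end
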